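(* Let $f_1$ admit a Taylor expansion $f_1(t)=\sum_{m\ge0}b_mt^m$ on $[-1,1]$ with coefficients satisfying $c_2r^m\le b_m\le c_1r^m$ for all $m\ge0$, for some constants $0<r<1$ and $0<c_2\le c_1$. Then for every integer $\alpha\ge1$ there exist constants $C_{1,\alpha},C_{2,\alpha}>0$ (depending only on $\alpha$, $d$, and the constants $r,c_1,c_2$) such that for all $m\ge0$ $$C_{2,\alpha}\Big(\frac r4\Big)^m\le\lambda_{m,\alpha}\le C_{1,\alpha}(m+1)^{\alpha-1}r^m.$$
   Context: $d\ge2$; $|S^{d-2}|$ is the surface area of the unit sphere $S^{d-2}$. For integers $k,\alpha\ge0$, $b_{j,\alpha}$ denotes the coefficient of $t^j$ in the power series of $f_1^\alpha$, and $$\lambda_{k,\alpha}=\frac{|S^{d-2}|\Gamma((d-1)/2)}{2^{k+1}}\sum_{s\ge0}b_{2s+k,\alpha}\frac{(2s+k)!}{(2s)!}\frac{\Gamma(s+1/2)}{\Gamma(s+k+d/2)}$$ (this is the eigenvalue of the integral operator of the dot-product kernel $(x,x')\mapsto f_1^\alpha(\langle x,x'\rangle)$ on $L_2(S^{d-1},\sigma_{d-1})$ on spherical harmonics of degree $k$). *)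

theory Defs
  imports "HOL-Analysis.Analysis" "HOL-Computational_Algebra.Formal_Power_Series"
begin

text \<open>Surface area of the unit sphere S^n in R^(n+1): 2 pi^((n+1)/2) / Gamma((n+1)/2).
  For n = 0 this is 2 (counting measure on S^0 = {-1,1}).\<close>
definition sphere_area :: "nat \<Rightarrow> real" where
  "sphere_area n = 2 * pi powr ((real n + 1) / 2) / Gamma ((real n + 1) / 2)"

definition pow_coeff :: "(nat \<Rightarrow> real) \<Rightarrow> nat \<Rightarrow> nat \<Rightarrow> real" where
  "pow_coeff b j \<alpha> = fps_nth ((Abs_fps b) ^ \<alpha>) j"

text \<open>lambda_{k,alpha} for the dot-product kernel f_1^alpha on S^(d-1).\<close>
definition eig :: "nat \<Rightarrow> (nat \<Rightarrow> real) \<Rightarrow> nat \<Rightarrow> nat \<Rightarrow> real" where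
  "eig d b k \<alpha> =
     sphere_area (d - 2) * Gamma ((real d - 1) / 2) / 2 ^ (k + 1) *
     (\<Sum>s. pow_coeff b (2 * s + k) \<alpha> * (fact (2 * s + k) / fact (2 * s)) *
           (Gamma (real s + 1 / 2) / Gamma (real s + real k + real d / 2)))"

end

theory Submission imports Defs begin

lemma coef_bounds:
  fixes b :: "nat \<Rightarrow> real"
  assumes hb: "\<forall>m. c2*r^m \<le> b m \<and> b m \<le> c1*r^m" and r: "0<r" and c2: "0<c2"
  shows "c2^Suc n * r^j \<le> fps_nth (Abs_fps b ^ Suc n) j \<and> fps_nth (Abs_fps b ^ Suc n) j \<le> c1^Suc n * r^j * (real j+1)^n"
proof (induction n arbitrary: j)
  case 0
  then show ?case using hb by simp
next
  case (Suc n)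
  have c1: "c2 \<le> c1" using hb[rule_format, of 0] by simp
  have bpos: "0 \<le> b i" for i using hb[rule_format, of i] c2 r
    by (meson less_eq_real_def order.trans zero_less_mult_iff zero_less_power)
  have eq: "fps_nth (Abs_fps b ^ Suc (Suc n)) j = (\<Sum>i=0..j. b i * fps_nth (Abs_fps b ^ Suc n) (j-i))"
  proof -
    have "Abs_fps b ^ Suc (Suc n) = Abs_fps b * Abs_fps b ^ Suc n" by (rule power_Suc)
    then show ?thesis by (simp only: fps_mult_nth) simp
  qed
  have lo: "c2^Suc (Suc n) * r^j \<le> b i * fps_nth (Abs_fps b ^ Suc n) (j-i)" if "i \<le> j" for i
  proof -
    have "c2^Suc (Suc n) * r^j = (c2 * r^i) * (c2^Suc n * r^(j-i))"
      using that by (simp add: power_add[symmetric] algebra_simps)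
    also have "\<dots> \<le> b i * fps_nth (Abs_fps b ^ Suc n) (j-i)"
      using Suc.IH[of "j-i"] hb c2 r bpos by (intro mult_mono) auto
    finally show ?thesis .
  qed
  have up: "b i * fps_nth (Abs_fps b ^ Suc n) (j-i) \<le> c1^Suc (Suc n) * r^j * (real j+1)^n" if "i \<le> j" for i
  proof -
    have "b i * fps_nth (Abs_fps b ^ Suc n) (j-i) \<le> (c1 * r^i) * (c1^Suc n * r^(j-i) * (real (j-i)+1)^n)"
    proof -
      have "0 \<le> fps_nth (Abs_fps b ^ Suc n) (j-i)"
        using Suc.IH[of "j-i"] c2 r by (meson order.trans less_eq_real_def mult_pos_pos zero_less_power)
      then show ?thesis using Suc.IH[of "j-i"] hb c2 r c1 bpos by (intro mult_mono) auto
    qed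
    also have "\<dots> = c1^Suc (Suc n) * r^j * (real (j-i)+1)^n"
      using that by (simp add: power_add[symmetric] algebra_simps)
    also have "\<dots> \<le> c1^Suc (Suc n) * r^j * (real j+1)^n"
      using c1 c2 r that by (intro mult_left_mono power_mono) auto
    finally show ?thesis .
  qed
  have "c2^Suc (Suc n) * r^j \<le> (\<Sum>i=0..j. c2^Suc (Suc n) * r^j)"
    using c2 r by simp
  also have "\<dots> \<le> (\<Sum>i=0..j. b i * fps_nth (Abs_fps b ^ Suc n) (j-i))"
    by (intro sum_mono lo) auto
  finally have A: "c2^Suc (Suc n) * r^j \<le> fps_nth (Abs_fps b ^ Suc (Suc n)) j" using eq by simp
  have "(\<Sum>i=0..j. b i * fps_nth (Abs_fps b ^ Suc n) (j-i)) \<le> (\<Sum>i=0..j. c1^Suc (Suc n) * r^j * (real j+1)^n)"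
    by (intro sum_mono up) auto
  also have "\<dots> = c1^Suc (Suc n) * r^j * (real j+1)^Suc n" by (simp add: algebra_simps)
  finally show ?case using A eq by simp
qed

lemma diffs_pow_eq: "((diffs ^^ a) (\<lambda>_. 1::real)) n = pochhammer (real n + 1) a"
proof (induction a arbitrary: n)
  case 0 then show ?case by simp
next
  case (Suc a)
  have "((diffs ^^ Suc a) (\<lambda>_. 1::real)) n = real (Suc n) * ((diffs ^^ a) (\<lambda>_. 1::real)) (Suc n)"
    by (simp add: diffs_def)
  also have "\<dots> = pochhammer (real n + 1) (Suc a)"
    using Suc.IH[of "Suc n"] by (simp add: pochhammer_rec add_ac)
  finally show ?case .
qed

lemma summable_diffs_pow: "norm (x::real) < 1 \<Longrightarrow> summable (\<lambda>n. ((diffs ^^ a) (\<lambda>_. 1::real)) n * x ^ n)"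
proof (induction a arbitrary: x)
  case 0 then show ?case by simp
next
  case (Suc a)
  show ?case using termdiff_converges[of x 1 "(diffs ^^ a) (\<lambda>_. 1::real)"] Suc by simp
qed

lemma summable_poly_geom:
  fixes x :: real assumes "0 \<le> x" "x < 1"
  shows "summable (\<lambda>n. (real n + 1) ^ a * x ^ n)"
proof (rule summable_comparison_test)
  show "summable (\<lambda>n. ((diffs ^^ a) (\<lambda>_. 1::real)) n * x ^ n)"
    using assms by (intro summable_diffs_pow) simp
  show "\<exists>N. \<forall>n\<ge>N. norm ((real n + 1) ^ a * x ^ n) \<le> ((diffs ^^ a) (\<lambda>_. 1::real)) n * x ^ n"
  proof (intro exI allI impI)
    fix n :: nat
    have "(real n + 1) ^ a = (\<Prod>i<a. real n + 1)" by simp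
    also have "\<dots> \<le> (\<Prod>i<a. real n + 1 + real i)" by (intro prod_mono) auto
    also have "\<dots> = ((diffs ^^ a) (\<lambda>_. 1::real)) n" by (simp add: diffs_pow_eq pochhammer_prod atLeast0LessThan)
    finally show "norm ((real n + 1) ^ a * x ^ n) \<le> ((diffs ^^ a) (\<lambda>_. 1::real)) n * x ^ n"
      using assms by (simp add: abs_mult mult_right_mono)
  qed
qed

lemma Gamma_shift: "z > 0 \<Longrightarrow> Gamma (z + real n) = pochhammer z n * Gamma (z::real)"
proof -
  assume z: "z > 0"
  then have "z \<notin> \<int>\<^sub>\<le>\<^sub>0" by (auto elim!: nonpos_Ints_cases)
  then have "pochhammer z n = Gamma (z + of_nat n) / Gamma z" by (rule pochhammer_Gamma)
  then show ?thesis using Gamma_real_pos[OF z] by simp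
qed

lemma gamma_upper:
  assumes d: "d \<ge> 2"
  shows "0 \<le> fact (2 * s+k) / fact (2 * s) * (Gamma (real s + 1/2) / Gamma (real s + real k + real d / 2))
    \<and> fact (2 * s+k) / fact (2 * s) * (Gamma (real s + 1/2) / Gamma (real s + real k + real d / 2))
       \<le> 2^k * (Gamma (1/2) / Gamma (real d / 2))"
proof -
  define h where "h = real d / 2"
  have h: "h \<ge> 1" using d unfolding h_def by simp
  have G1: "Gamma (real s + real k + h) = pochhammer (real s + h) k * Gamma (real s + h)"
    using Gamma_shift[of "real s + h" k] h by (simp add: add_ac)
  have G2: "Gamma (real s + h) = pochhammer h s * Gamma h"
    using Gamma_shift[of h s] h by (simp add: add_ac)
  have G3: "Gamma (real s + 1/2) = pochhammer (1/2) s * Gamma (1/2)"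
    using Gamma_shift[of "1/2" s] by (simp add: add_ac)
  have F: "(fact (2 * s+k) :: real) = fact (2 * s) * pochhammer (real (2 * s) + 1) k"
    unfolding pochhammer_fact using pochhammer_product'[of "1::real" "2 * s" k] by (simp add: add_ac)
  have P1: "pochhammer (real (2 * s) + 1) k \<le> 2^k * pochhammer (real s + h) k"
  proof -
    have "pochhammer (real (2 * s) + 1) k \<le> (\<Prod>i<k. 2 * (real s + h + real i))"
      unfolding pochhammer_prod atLeast0LessThan using h by (intro prod_mono) auto
    also have "\<dots> = 2^k * (\<Prod>i<k. (real s + h + real i))"
      by (simp only: prod.distrib prod_constant card_lessThan)
    also have "\<dots> = 2^k * pochhammer (real s + h) k"
      by (simp add: pochhammer_prod atLeast0LessThan)
    finally show ?thesis .
  qed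
  have P2: "pochhammer (1/2) s \<le> pochhammer h s"
    unfolding pochhammer_prod using h by (intro prod_mono) auto
  have pos1: "pochhammer (real (2 * s) + 1) k > 0" "pochhammer (1/2::real) s > 0"
     "pochhammer (real s + h) k > 0" "pochhammer h s > 0"
    using h by (auto intro!: pochhammer_pos)
  have g: "Gamma (1/2::real) > 0" "Gamma h > 0" using h by auto
  have E: "fact (2 * s+k) / fact (2 * s) * (Gamma (real s + 1/2) / Gamma (real s + real k + real d / 2))
     = (pochhammer (real (2 * s) + 1) k / pochhammer (real s + h) k) * (pochhammer (1/2) s / pochhammer h s)
       * (Gamma (1/2) / Gamma h)"
    unfolding F G3 h_def[symmetric] G1 G2 by (simp add: field_simps)
  have "(pochhammer (real (2 * s) + 1) k / pochhammer (real s + h) k) \<le> 2^k"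
    using P1 pos1 by (simp add: divide_le_eq)
  moreover have "pochhammer (1/2) s / pochhammer h s \<le> 1" using P2 pos1 by simp
  ultimately have "(pochhammer (real (2 * s) + 1) k / pochhammer (real s + h) k) * (pochhammer (1/2) s / pochhammer h s)
      * (Gamma (1/2) / Gamma h) \<le> 2^k * 1 * (Gamma (1/2) / Gamma h)"
    using pos1 g by (intro mult_right_mono mult_mono) auto
  moreover have "0 \<le> (pochhammer (real (2 * s) + 1) k / pochhammer (real s + h) k) * (pochhammer (1/2) s / pochhammer h s)
      * (Gamma (1/2) / Gamma h)" using pos1 g by simp
  ultimately show ?thesis unfolding E h_def by simp
qed

lemma poch_bound:
  assumes d: "d \<ge> 2"
  shows "pochhammer (real d / 2) k \<le> real d ^ min k d * 2^k * fact k"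
proof (induction k)
  case 0 then show ?case by simp
next
  case (Suc k)
  have f: "real d / 2 + real k \<le> (if k < d then real d else 1) * 2 * (real k + 1)"
  proof (cases "k < d")
    case True
    have "real k \<le> real d * real k" using d mult_right_mono[of 1 "real d" "real k"] by simp
    then show ?thesis using True d by (simp add: algebra_simps)
  next
    case False then show ?thesis by simp
  qed
  have "pochhammer (real d / 2) (Suc k) = pochhammer (real d / 2) k * (real d / 2 + real k)"
    by (simp add: pochhammer_Suc)
  also have "\<dots> \<le> (real d ^ min k d * 2^k * fact k) * ((if k < d then real d else 1) * 2 * (real k + 1))"
    using Suc.IH f d by (intro mult_mono) (auto intro!: pochhammer_nonneg)
  also have "\<dots> = real d ^ min (Suc k) d * 2^Suc k * fact (Suc k)"
  proof (cases "k < d")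
    case True then show ?thesis by (simp add: min_def algebra_simps)
  next
    case False
    then have "min k d = d" "min (Suc k) d = d" by auto
    then show ?thesis using False by (simp add: algebra_simps)
  qed
  finally show ?case .
qed

lemma gamma_lower:
  assumes d: "d \<ge> 2"
  shows "Gamma (1/2) / (Gamma (real d / 2) * real d ^ d) * (1/2)^k
     \<le> fact k * (Gamma (1/2) / Gamma (real k + real d / 2))"
proof -
  define h where "h = real d / 2"
  have h: "h \<ge> 1" using d unfolding h_def by simp
  have G: "Gamma (real k + h) = pochhammer h k * Gamma h"
    using Gamma_shift[of h k] h by (simp add: add_ac)
  have pb: "pochhammer h k \<le> real d ^ d * 2^k * fact k"
    using poch_bound[OF d, of k] d unfolding h_def
    by (smt (verit) fact_gt_zero le_add_diff_inverse min.cobounded2 mult_right_mono one_le_power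
       power_add power_increasing zero_le_power  of_nat_1 of_nat_le_iff one_le_numeral order_trans)
  have pos: "pochhammer h k > 0" "Gamma h > 0" "Gamma (1/2::real) > 0" "real d ^ d > 0"
    using h d by (auto intro!: pochhammer_pos)
  have "Gamma (1/2) / (Gamma h * real d ^ d) * (1/2)^k = fact k * (Gamma (1/2) / (Gamma h * (real d ^ d * 2^k * fact k)))"
    by (simp add: field_simps power_divide)
  also have "\<dots> \<le> fact k * (Gamma (1/2) / (Gamma h * pochhammer h k))"
    using pos pb by (intro mult_left_mono divide_left_mono mult_left_mono) auto
  also have "\<dots> = fact k * (Gamma (1/2) / Gamma (real k + h))" by (simp add: G mult.commute)
  finally show ?thesis unfolding h_def .
qed

theorem mainTheorem4:
  fixes d :: nat and r c\<^sub>1 c\<^sub>2 :: real and \<alpha> :: nat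
  assumes "d \<ge> 2" and "0 < r" and "r < 1" and "0 < c\<^sub>2" and "c\<^sub>2 \<le> c\<^sub>1" and "\<alpha> \<ge> 1"
  shows "\<exists>C\<^sub>1 C\<^sub>2 :: real. C\<^sub>1 > 0 \<and> C\<^sub>2 > 0 \<and>
    (\<forall>(f\<^sub>1 :: real \<Rightarrow> real) (b :: nat \<Rightarrow> real).
       (\<forall>t\<in>{-1..1}. (\<lambda>m. b m * t ^ m) sums f\<^sub>1 t) \<longrightarrow>
       (\<forall>m. c\<^sub>2 * r ^ m \<le> b m \<and> b m \<le> c\<^sub>1 * r ^ m) \<longrightarrow>
       (\<forall>m. C\<^sub>2 * (r / 4) ^ m \<le> eig d b m \<alpha> \<and>
            eig d b m \<alpha> \<le> C\<^sub>1 * (real m + 1) ^ (\<alpha> - 1) * r ^ m))"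
proof -
  note d = assms(1) and r = assms(2,3) and c2 = assms(4) and c12 = assms(5)
  obtain a where \<alpha>: "\<alpha> = Suc a" using assms(6) by (cases \<alpha>) auto
  define A where "A = sphere_area (d - 2) * Gamma ((real d - 1) / 2)"
  define K where "K = Gamma (1/2) / Gamma (real d / 2)"
  define S where "S = (\<Sum>s. (real s + 1) ^ a * (r^2) ^ s)"
  define C1 where "C1 = A / 2 * K * c\<^sub>1 ^ \<alpha> * 2 ^ a * S"
  define C2 where "C2 = A / 2 * c\<^sub>2 ^ \<alpha> * (Gamma (1/2) / (Gamma (real d / 2) * real d ^ d))"
  have Apos: "A > 0"
  proof -
    have g: "Gamma ((real d - 1) / 2) > 0" using d by (intro Gamma_real_pos) simp
    have "sphere_area (d - 2) > 0" unfolding sphere_area_def using d g by (simp add: of_nat_diff)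
    moreover note g
    ultimately show ?thesis unfolding A_def by simp
  qed
  have Kpos: "K > 0" unfolding K_def using d by simp
  have r2: "0 \<le> r^2" "r^2 < 1" using r by (auto simp: power_less_one_iff)
  have sumS: "summable (\<lambda>s. (real s + 1) ^ a * (r^2) ^ s)" by (rule summable_poly_geom[OF r2])
  have Spos: "S > 0"
  proof -
    have "(\<Sum>s\<in>{0}. (real s + 1) ^ a * (r^2) ^ s) \<le> S"
      unfolding S_def using sumS r by (intro sum_le_suminf) auto
    then show ?thesis by simp
  qed
  have c1: "c\<^sub>1 > 0" using c2 c12 by simp
  have C1pos: "C1 > 0" unfolding C1_def using Apos Kpos Spos c1 by simp
  have C2pos: "C2 > 0" unfolding C2_def using Apos c2 d by simp
  show ?thesis
  proof (intro exI conjI allI impI)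
    fix f :: "real \<Rightarrow> real" and b :: "nat \<Rightarrow> real" and k :: nat
    assume hb: "\<forall>m. c\<^sub>2 * r ^ m \<le> b m \<and> b m \<le> c\<^sub>1 * r ^ m"
    define p where "p j = pow_coeff b j \<alpha>" for j
    have pb: "c\<^sub>2^\<alpha> * r^j \<le> p j \<and> p j \<le> c\<^sub>1^\<alpha> * r^j * (real j+1)^a" for j
      unfolding p_def pow_coeff_def \<alpha> using coef_bounds[OF hb r(1) c2] by blast
    have p0: "0 \<le> p j" for j using pb[of j] c2 r
      by (meson less_eq_real_def order.trans zero_less_mult_iff zero_less_power)
    define T where "T s = pow_coeff b (2 * s + k) \<alpha> * (fact (2 * s + k) / fact (2 * s)) *
           (Gamma (real s + 1 / 2) / Gamma (real s + real k + real d / 2))" for s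
    define B where "B s = c\<^sub>1^\<alpha> * r^k * (real k + 1)^a * 2^a * 2^k * K * ((real s + 1) ^ a * (r^2) ^ s)" for s
    have eigT: "eig d b k \<alpha> = A / 2^(k+1) * (\<Sum>s. T s)"
      unfolding eig_def T_def A_def by simp
    have T0: "0 \<le> T s" for s
    proof -
      have "0 \<le> p (2 * s + k) * (fact (2 * s + k) / fact (2 * s) * (Gamma (real s + 1 / 2) / Gamma (real s + real k + real d / 2)))"
        by (rule mult_nonneg_nonneg[OF p0 gamma_upper[OF d, of s k, THEN conjunct1]])
      then show ?thesis unfolding T_def p_def by (simp only: mult.assoc)
    qed
    have TB: "T s \<le> B s" for s
    proof -
      have g: "fact (2 * s + k) / fact (2 * s) * (Gamma (real s + 1 / 2) / Gamma (real s + real k + real d / 2)) \<le> 2^k * K"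
        and g0: "0 \<le> fact (2 * s + k) / fact (2 * s) * (Gamma (real s + 1 / 2) / Gamma (real s + real k + real d / 2))"
        using gamma_upper[OF d, of s k] unfolding K_def by auto
      have q: "(real (2 * s + k) + 1) ^ a \<le> ((real k + 1) * (2 * (real s + 1))) ^ a"
        by (intro power_mono) (auto simp: algebra_simps)
      have "T s = p (2 * s + k) * (fact (2 * s + k) / fact (2 * s) * (Gamma (real s + 1 / 2) / Gamma (real s + real k + real d / 2)))"
        unfolding T_def p_def by simp
      also have "\<dots> \<le> (c\<^sub>1^\<alpha> * r^(2 * s + k) * (real (2 * s + k)+1)^a) * (2^k * K)"
        by (rule mult_mono[OF pb[of "2 * s + k", THEN conjunct2] g _ g0])
          (use c1 r in auto)
      also have "\<dots> \<le> (c\<^sub>1^\<alpha> * r^(2 * s + k) * ((real k + 1) * (2 * (real s + 1))) ^ a) * (2^k * K)"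
        using q c1 r Kpos by (intro mult_right_mono[OF mult_left_mono[OF q]]) auto
      also have "\<dots> = B s"
      proof -
        have e1: "((real k + 1) * (2 * (real s + 1))) ^ a = (real k + 1)^a * 2^a * (real s + 1)^a"
          by (simp only: power_mult_distrib mult.assoc)
        have e2: "r^(2 * s + k) = r^k * (r^2)^s" by (simp add: power_add power_mult[symmetric] mult.commute)
        show ?thesis unfolding B_def e1 e2 by (simp only: ac_simps)
      qed
      finally show ?thesis .
    qed
    have sumB: "summable B" unfolding B_def by (intro summable_mult sumS)
    have sumT: "summable T" using T0 TB sumB by (intro summable_comparison_test[OF _ sumB]) auto
    have "(\<Sum>s. T s) \<le> (\<Sum>s. B s)" by (intro suminf_le TB sumT sumB)
    also have "(\<Sum>s. B s) = c\<^sub>1^\<alpha> * r^k * (real k + 1)^a * 2^a * 2^k * K * S"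
      unfolding B_def S_def by (rule suminf_mult[OF sumS])
    finally have up: "(\<Sum>s. T s) \<le> c\<^sub>1^\<alpha> * r^k * (real k + 1)^a * 2^a * 2^k * K * S" .
    have "eig d b k \<alpha> \<le> A / 2^(k+1) * (c\<^sub>1^\<alpha> * r^k * (real k + 1)^a * 2^a * 2^k * K * S)"
      unfolding eigT using up Apos by (intro mult_left_mono) auto
    also have "\<dots> = C1 * (real k + 1) ^ (\<alpha> - 1) * r ^ k"
      unfolding C1_def \<alpha> by (simp add: field_simps)
    finally show "eig d b k \<alpha> \<le> C1 * (real k + 1) ^ (\<alpha> - 1) * r ^ k" .
    have "T 0 \<le> (\<Sum>s. T s)"
      using sum_le_suminf[OF sumT, of "{0}"] T0 by simp
    moreover have "c\<^sub>2^\<alpha> * r^k * (Gamma (1/2) / (Gamma (real d / 2) * real d ^ d) * (1/2)^k) \<le> T 0"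
    proof -
      have "T 0 = p k * (fact k * (Gamma (1/2) / Gamma (real k + real d / 2)))"
        unfolding T_def p_def by simp
      moreover have "0 \<le> Gamma (1/2) / (Gamma (real d / 2) * real d ^ d) * (1/2::real)^k"
        using d by simp
      ultimately show ?thesis
        by (simp only:) (rule mult_mono[OF pb[of k, THEN conjunct1] gamma_lower[OF d, of k] p0])
    qed
    ultimately have lo: "c\<^sub>2^\<alpha> * r^k * (Gamma (1/2) / (Gamma (real d / 2) * real d ^ d) * (1/2)^k) \<le> (\<Sum>s. T s)"
      by linarith
    have "C2 * (r / 4) ^ k = A / 2^(k+1) * (c\<^sub>2^\<alpha> * r^k * (Gamma (1/2) / (Gamma (real d / 2) * real d ^ d) * (1/2)^k))"
    proof -
      have "(4::real)^k = 2^k * 2^k" by (simp flip: power_mult_distrib)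
      then show ?thesis unfolding C2_def by (simp add: field_simps power_divide)
    qed
    also have "\<dots> \<le> eig d b k \<alpha>"
      unfolding eigT using lo Apos by (intro mult_left_mono) auto
    finally show "C2 * (r / 4) ^ k \<le> eig d b k \<alpha>" .
  qed (use C1pos C2pos in auto)
qed

end
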